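(* There exists a divergent series of positive real terms $\sum_{n=1}^{\infty}y_n$ with $\lim_{n\to\infty}y_n=0$ such that $\{\sum_{n=1}^{\infty}(y_n-y_{\tau(n)}) : \tau\in S_\infty,\ \text{the series converges}\}=\mathbb{R}$.
   Context: $S_\infty$ denotes the set of all permutations of $\mathbb{N}$. *)

theory Defs
  imports "HOL-Analysis.Analysis"
begin

end

theory Submission
  imports Defs "HOL-Real_Asymp.Real_Asymp"
begin


definition swp :: "(nat \<Rightarrow> nat) \<Rightarrow> (nat \<Rightarrow> nat) \<Rightarrow> nat \<Rightarrow> nat" where
 "swp a b n = (if n \<in> range a then b (inv a n) else if n \<in> range b then a (inv b n) else n)"

lemma swp_invol:
  assumes "inj a" "inj b" "range a \<inter> range b = {}"
  shows "swp a b (swp a b n) = n"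
  using assms unfolding swp_def by (auto simp: inv_f_f f_inv_into_f)

lemma swp_bij:
  assumes "inj a" "inj b" "range a \<inter> range b = {}"
  shows "bij (swp a b)"
  by (metis assms swp_invol bij_betw_byWitness subset_UNIV top.extremum_uniqueI image_subsetI UNIV_I)

lemma swp_a: assumes "inj a" shows "swp a b (a k) = b k"
  using assms unfolding swp_def by (auto simp: inv_f_f)
lemma swp_b: assumes "inj b" "range a \<inter> range b = {}" shows "swp a b (b k) = a k"
  using assms unfolding swp_def by (auto simp: inv_f_f)
lemma swp_other: assumes "n \<notin> range a" "n \<notin> range b" shows "swp a b n = n"
  using assms unfolding swp_def by auto

lemma swp_partial:
  fixes y :: "nat \<Rightarrow> real"
  assumes "inj a" "inj b" "range a \<inter> range b = {}" "\<And>k. a k < b k"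
  shows "(\<Sum>n<N. y n - y (swp a b n)) = (\<Sum>k\<in>{k. a k < N \<and> N \<le> b k}. y (a k) - y (b k))"
proof (induction N)
  case 0
  then show ?case by simp
next
  case (Suc N)
  have fin: "finite {k. a k < M \<and> M \<le> b k}" for M
    by (rule finite_subset[where B="a -` {..<M}"]) (auto intro: finite_vimageI assms)
  show ?case
  proof (cases "N \<in> range a")
    case True
    then obtain k0 where k0: "N = a k0" by auto
    have "{k. a k < Suc N \<and> Suc N \<le> b k} = insert k0 {k. a k < N \<and> N \<le> b k}"
    proof (intro set_eqI iffI)
      fix k assume "k \<in> {k. a k < Suc N \<and> Suc N \<le> b k}"
      then show "k \<in> insert k0 {k. a k < N \<and> N \<le> b k}"
        using k0 \<open>inj a\<close> by (auto simp: inj_eq less_Suc_eq)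
    next
      fix k assume "k \<in> insert k0 {k. a k < N \<and> N \<le> b k}"
      moreover have "b k \<noteq> a k0" using assms(3) by (metis disjoint_iff rangeI)
      ultimately show "k \<in> {k. a k < Suc N \<and> Suc N \<le> b k}"
        using k0 assms(4)[of k0] by auto
    qed
    moreover have "k0 \<notin> {k. a k < N \<and> N \<le> b k}" using k0 by auto
    ultimately show ?thesis using Suc fin k0 swp_a[OF assms(1)] by simp
  next
    case F1: False
    show ?thesis
    proof (cases "N \<in> range b")
      case True
      then obtain k0 where k0: "N = b k0" by auto
      have "{k. a k < N \<and> N \<le> b k} = insert k0 {k. a k < Suc N \<and> Suc N \<le> b k}"
      proof (intro set_eqI iffI)
        fix k assume "k \<in> {k. a k < N \<and> N \<le> b k}"
        then show "k \<in> insert k0 {k. a k < Suc N \<and> Suc N \<le> b k}"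
          using k0 \<open>inj b\<close> by (auto simp: inj_eq le_eq_less_or_eq Suc_le_eq)
      next
        fix k assume "k \<in> insert k0 {k. a k < Suc N \<and> Suc N \<le> b k}"
        then show "k \<in> {k. a k < N \<and> N \<le> b k}"
          using k0 F1 assms(4)[of k0] by (auto simp: less_Suc_eq) (metis rangeI)
      qed
      moreover have "k0 \<notin> {k. a k < Suc N \<and> Suc N \<le> b k}" using k0 by auto
      ultimately show ?thesis using Suc fin k0 swp_b[OF assms(2,3)] by simp
    next
      case False
      have "{k. a k < Suc N \<and> Suc N \<le> b k} = {k. a k < N \<and> N \<le> b k}"
      proof (intro set_eqI iffI)
        fix k assume "k \<in> {k. a k < Suc N \<and> Suc N \<le> b k}"
        moreover have "a k \<noteq> N" using F1 by auto
        ultimately show "k \<in> {k. a k < N \<and> N \<le> b k}" by auto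
      next
        fix k assume "k \<in> {k. a k < N \<and> N \<le> b k}"
        moreover have "b k \<noteq> N" using False by auto
        ultimately show "k \<in> {k. a k < Suc N \<and> Suc N \<le> b k}" by auto
      qed
      then show ?thesis using Suc swp_other[OF F1 False] by simp
    qed
  qed
qed



lemma card_nat_interval: "{k::nat. a \<le> real k \<and> real k < b} = {nat \<lceil>a\<rceil>..<nat \<lceil>b\<rceil>}"
proof (intro set_eqI)
  fix x :: nat
  have 1: "x < nat \<lceil>b\<rceil> \<longleftrightarrow> real x < b"
    using zless_nat_eq_int_zless[of x "\<lceil>b\<rceil>"] less_ceiling_iff[of "int x" b] by simp
  have 2: "nat \<lceil>a\<rceil> \<le> x \<longleftrightarrow> a \<le> real x"
    using nat_le_iff[of "\<lceil>a\<rceil>" x] ceiling_le_iff[of a "int x"] by simp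
  show "x \<in> {k::nat. a \<le> real k \<and> real k < b} \<longleftrightarrow> x \<in> {nat \<lceil>a\<rceil>..<nat \<lceil>b\<rceil>}"
    using 1 2 by auto
qed

lemma fin_nat_interval: "finite {k::nat. a \<le> real k \<and> real k < b}"
  by (simp add: card_nat_interval)

lemma nat_ceil_bounds: "real (nat \<lceil>a\<rceil>) \<ge> a" "0 \<le> a \<Longrightarrow> real (nat \<lceil>a\<rceil>) < a + 1"
  "real (nat \<lceil>a\<rceil>) < max a 0 + 1"
proof -
  have "real (nat \<lceil>a\<rceil>) = max (real_of_int \<lceil>a\<rceil>) 0" by (simp add: max_def)
  moreover have "a \<le> real_of_int \<lceil>a\<rceil>" "real_of_int \<lceil>a\<rceil> < a + 1" using ceiling_correct[of a] by auto
  ultimately show "real (nat \<lceil>a\<rceil>) \<ge> a" "0 \<le> a \<Longrightarrow> real (nat \<lceil>a\<rceil>) < a + 1"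
      "real (nat \<lceil>a\<rceil>) < max a 0 + 1" by (auto simp: max_def)
qed

lemma card_lb: assumes "0 \<le> a" shows "b - a - 1 \<le> real (card {k::nat. a \<le> real k \<and> real k < b})"
proof -
  have "real (nat \<lceil>b\<rceil> - nat \<lceil>a\<rceil>) \<ge> real (nat \<lceil>b\<rceil>) - real (nat \<lceil>a\<rceil>)"
  proof (cases "nat \<lceil>a\<rceil> \<le> nat \<lceil>b\<rceil>")
    case True then show ?thesis by (simp add: of_nat_diff)
  next
    case False
    then have "real (nat \<lceil>b\<rceil>) \<le> real (nat \<lceil>a\<rceil>)" by (simp only: of_nat_le_iff)
    moreover have "0 \<le> real (nat \<lceil>b\<rceil> - nat \<lceil>a\<rceil>)" by (rule of_nat_0_le_iff)
    ultimately show ?thesis by linarith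
  qed
  moreover have "real (nat \<lceil>b\<rceil>) \<ge> b" "real (nat \<lceil>a\<rceil>) < a + 1" using nat_ceil_bounds assms by auto
  ultimately have "real (nat \<lceil>b\<rceil> - nat \<lceil>a\<rceil>) \<ge> b - a - 1" by linarith
  then show ?thesis by (simp add: card_nat_interval)
qed

lemma card_ub: assumes "a \<le> b" shows "real (card {k::nat. a \<le> real k \<and> real k < b}) \<le> b - a + 1"
proof -
  have "real (nat \<lceil>b\<rceil> - nat \<lceil>a\<rceil>) \<le> b - a + 1"
  proof (cases "nat \<lceil>a\<rceil> \<le> nat \<lceil>b\<rceil>")
    case T2: True
    then have "real (nat \<lceil>b\<rceil> - nat \<lceil>a\<rceil>) = real (nat \<lceil>b\<rceil>) - real (nat \<lceil>a\<rceil>)" by simp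
    moreover have "real (nat \<lceil>a\<rceil>) \<ge> a" "real (nat \<lceil>b\<rceil>) < max b 0 + 1" using nat_ceil_bounds by auto
    moreover have "b \<le> 0 \<Longrightarrow> nat \<lceil>b\<rceil> = 0" by simp
    moreover have "real (nat \<lceil>a\<rceil>) \<ge> 0" by simp
    ultimately show ?thesis using assms by (cases "b \<le> 0") (auto simp: max_def)
  next
    case False
    then have "nat \<lceil>b\<rceil> - nat \<lceil>a\<rceil> = 0" by (metis diff_is_0_eq nat_le_linear)
    then show ?thesis using assms by simp
  qed
  then show ?thesis by (simp add: card_nat_interval)
qed



lemma geom_fin: "finite G \<Longrightarrow> (\<Sum>i\<in>G. (1/2::real)^i) \<le> 2"
proof -
  assume "finite G"
  have "(\<Sum>i\<in>G. (1/2::real)^i) \<le> (\<Sum>i. (1/2::real)^i)"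
    by (rule sum_le_suminf) (auto simp: \<open>finite G\<close>)
  also have "\<dots> = 2" using suminf_geometric[of "1/2::real"] by simp
  finally show ?thesis .
qed

lemma geom_tail_nat: assumes "finite F" "\<And>j. j \<in> F \<Longrightarrow> J \<le> j"
  shows "(\<Sum>j\<in>F. (1/2::real)^j) \<le> 2 * (1/2)^J"
proof -
  have e1: "(\<Sum>j\<in>F. (1/2::real)^j) = (\<Sum>j\<in>F. (1/2)^J * (1/2)^(j - J))"
    by (rule sum.cong) (auto simp: assms(2) power_add[symmetric])
  have e2: "(\<Sum>j\<in>F. (1/2::real)^J * (1/2)^(j - J)) = (1/2)^J * (\<Sum>j\<in>F. (1/2)^(j - J))"
    by (simp add: sum_distrib_left)
  have e3: "(\<Sum>j\<in>F. (1/2::real)^(j - J)) = (\<Sum>i\<in>(\<lambda>j. j - J) ` F. (1/2)^i)"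
    by (rule sum.reindex[symmetric, unfolded comp_def]) (auto simp: inj_on_def dest!: assms(2))
  have e4: "(\<Sum>i\<in>(\<lambda>j. j - J) ` F. (1/2::real)^i) \<le> 2"
    by (rule geom_fin) (use assms in auto)
  have "(1/2::real)^J * (\<Sum>j\<in>F. (1/2)^(j - J)) \<le> (1/2)^J * 2"
    using e3 e4 by (intro mult_left_mono) auto
  then show ?thesis using e1 e2 by simp
qed

lemma geom_tail: assumes "finite F" "\<And>j. j \<in> F \<Longrightarrow> t \<le> real j"
  shows "(\<Sum>j\<in>F. (1/2::real)^j) \<le> 2 * (1/2) powr t"
proof -
  have "(\<Sum>j\<in>F. (1/2::real)^j) \<le> 2 * (1/2)^(nat \<lceil>t\<rceil>)"
  proof (rule geom_tail_nat[OF assms(1)])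
    fix j assume "j \<in> F"
    then have "t \<le> real j" by (rule assms(2))
    then have "\<lceil>t\<rceil> \<le> int j" by (metis ceiling_le_iff of_int_of_nat_eq)
    then show "nat \<lceil>t\<rceil> \<le> j" by (metis nat_le_iff)
  qed
  also have "(1/2::real)^(nat \<lceil>t\<rceil>) \<le> (1/2) powr t"
  proof (cases "t \<le> 0")
    case True
    then have "nat \<lceil>t\<rceil> = 0" by simp
    moreover have "(1/2::real) powr 0 \<le> (1/2) powr t" using True by (intro powr_mono') auto
    ultimately show ?thesis by simp
  next
    case False
    have "(1/2::real)^(nat \<lceil>t\<rceil>) = (1/2) powr (real (nat \<lceil>t\<rceil>))" by (rule powr_realpow[symmetric]) simp
    also have "\<dots> \<le> (1/2) powr t" by (rule powr_mono') (use False in auto)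
    finally show ?thesis .
  qed
  finally show ?thesis by simp
qed



lemma sqrt_lower: assumes "0 \<le> x" "0 \<le> c" "x - c * sqrt x + c^2 \<le> k" "0 \<le> k" shows "sqrt x - c \<le> sqrt k"
proof (cases "sqrt x \<le> c")
  case True
  have "0 \<le> sqrt k" using assms(4) by simp
  then show ?thesis using True by linarith
next
  case False
  have sx: "(sqrt x)^2 = x" using assms(1) by simp
  have "(sqrt x - c)^2 = (sqrt x)^2 - 2*c * sqrt x + c^2" by (simp add: power2_eq_square algebra_simps)
  also have "\<dots> = x - 2*c * sqrt x + c^2" using sx by simp
  also have "\<dots> \<le> k"
  proof -
    have "0 \<le> c * sqrt x" using assms by simp
    then show ?thesis using assms(3) by linarith
  qed
  finally have "sqrt ((sqrt x - c)^2) \<le> sqrt k" by (rule real_sqrt_le_mono)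
  moreover have "sqrt ((sqrt x - c)^2) = sqrt x - c" using False by simp
  ultimately show ?thesis by simp
qed


context fixes c :: real assumes c: "c > 0" begin
lemma L1: "(\<lambda>N::nat. (c * sqrt(real N/2) - c^2 - 2)/sqrt(real N/2+1)) \<longlonglongrightarrow> c"
  using c by real_asymp
lemma U1: "(\<lambda>N::nat. (c * sqrt(real N/2) + 3/2)/sqrt(real N/2 + 1/2 - c * sqrt(real N/2))) \<longlonglongrightarrow> c"
  using c by real_asymp
lemma L2: "(\<lambda>N::nat. (c * sqrt(real N/2) - c^2 - 3/2)/sqrt(real N/2 + 3/2 + c * sqrt(real N/2))) \<longlonglongrightarrow> c"
  using c by real_asymp
lemma U2: "(\<lambda>N::nat. (c * sqrt(real N/2) + 3/2)/sqrt(real N/2+1)) \<longlonglongrightarrow> c"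
  using c by real_asymp
lemma T1: "(\<lambda>N::nat. 2 * (1/2) powr (real N/2 - 1 - c * sqrt(real N/2))) \<longlonglongrightarrow> 0"
  using c by real_asymp
lemma T2: "(\<lambda>N::nat. 2 * (1/2) powr (real N/2 - 1/2)) \<longlonglongrightarrow> 0"
  by real_asymp
lemma E1: "eventually (\<lambda>N::nat. real N/2 + 1/2 - c * sqrt(real N/2) > 0) sequentially"
  using c by real_asymp
end

definition hh :: "nat \<Rightarrow> real" where "hh k = 1 / sqrt (real k + 1)"
definition ll :: "nat \<Rightarrow> real" where "ll k = (1/2)^k"
definition yy :: "nat \<Rightarrow> real" where "yy n = (if even n then hh (n div 2) else ll (n div 2))"
definition fp :: "real \<Rightarrow> nat \<Rightarrow> nat" where "fp c k = k + nat \<lfloor>c * sqrt (real k)\<rfloor>"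

lemma fp_ge: "k \<le> fp c k" by (simp add: fp_def)

lemma fp_mono: assumes "0 \<le> c" "k < m" shows "fp c k < fp c m"
proof -
  have "c * sqrt (real k) \<le> c * sqrt (real m)" using assms by (intro mult_left_mono) auto
  then have "nat \<lfloor>c * sqrt (real k)\<rfloor> \<le> nat \<lfloor>c * sqrt (real m)\<rfloor>" by (intro nat_mono floor_mono)
  then show ?thesis using assms by (simp add: fp_def)
qed

lemma fp_inj: "0 \<le> c \<Longrightarrow> inj (fp c)"
  by (intro strict_mono_imp_inj_on) (auto simp: strict_mono_def fp_mono)

lemma fp_real_ub: assumes "0 \<le> c" shows "real (fp c k) \<le> real k + c * sqrt (real k)"
proof -
  have "0 \<le> c * sqrt (real k)" using assms by simp
  then have "real (nat \<lfloor>c * sqrt (real k)\<rfloor>) \<le> c * sqrt (real k)" by linarith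
  then show ?thesis by (simp add: fp_def)
qed

lemma fp_real_lb: assumes "0 \<le> c" shows "real (fp c k) > real k + c * sqrt (real k) - 1"
proof -
  have "0 \<le> c * sqrt (real k)" using assms by simp
  then have "real (nat \<lfloor>c * sqrt (real k)\<rfloor>) > c * sqrt (real k) - 1" by linarith
  then show ?thesis by (simp add: fp_def)
qed

lemma hh_pos: "hh k > 0" by (simp add: hh_def)

lemma hh_le: assumes "0 < d" "d \<le> real k + 1" shows "hh k \<le> 1 / sqrt d"
  using assms by (simp add: hh_def frac_le)

lemma hh_ge: assumes "real k + 1 \<le> d" shows "1 / sqrt d \<le> hh k"
  using assms by (simp add: hh_def frac_le)

lemma quad_nonneg: "0 \<le> x \<Longrightarrow> 0 \<le> x - c * sqrt x + c^2"
proof -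
  assume "0 \<le> x"
  then have "x - c * sqrt x + c^2 = (sqrt x - c/2)^2 + 3/4 * c^2"
    by (simp add: power2_eq_square algebra_simps)
  moreover have "0 \<le> (sqrt x - c/2)^2" by simp
  moreover have "0 \<le> 3/4 * c^2" by simp
  ultimately show ?thesis by linarith
qed

lemma pos_heavy:
  fixes N :: nat
  assumes c: "0 < c"
  defines "W \<equiv> {k. 2*k < N \<and> N \<le> 2 * fp c k + 1}"
  defines "x \<equiv> real N / 2"
  shows "(c * sqrt x - c^2 - 2) / sqrt (x+1) \<le> (\<Sum>k\<in>W. hh k)"
    and "0 < x + 1/2 - c * sqrt x \<Longrightarrow> (\<Sum>k\<in>W. hh k) \<le> (c * sqrt x + 3/2) / sqrt (x + 1/2 - c * sqrt x)"
proof -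
  have x0: "0 \<le> x" unfolding x_def by simp
  have csx: "0 \<le> c * sqrt x" using c x0 by simp
  have finW: "finite W" by (rule finite_subset[of _ "{..<N}"]) (auto simp: W_def)
  have S1: "{k. x - c * sqrt x + c^2 + 1 \<le> real k \<and> real k < x} \<subseteq> W"
  proof
    fix k assume "k \<in> {k. x - c * sqrt x + c^2 + 1 \<le> real k \<and> real k < x}"
    then have k1: "x - c * sqrt x + c^2 + 1 \<le> real k" and k2: "real k < x" by auto
    have sq: "sqrt x - c \<le> sqrt (real k)" by (rule sqrt_lower) (use x0 c k1 in auto)
    have "c * (sqrt x - c) \<le> c * sqrt (real k)" using sq c by (intro mult_left_mono) auto
    then have "real (fp c k) > x" using fp_real_lb[of c k] c k1 by (simp add: algebra_simps power2_eq_square)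
    then have "real N < real (2 * fp c k + 1)" unfolding x_def by simp
    then have "N \<le> 2 * fp c k + 1" by linarith
    moreover have "2 * k < N" using k2 unfolding x_def by linarith
    ultimately show "k \<in> W" unfolding W_def by simp
  qed
  have S2: "W \<subseteq> {k. x - 1/2 - c * sqrt x \<le> real k \<and> real k < x}"
  proof
    fix k assume "k \<in> W"
    then have k1: "2 * k < N" and k2: "N \<le> 2 * fp c k + 1" by (auto simp: W_def)
    have kx: "real k < x" using k1 unfolding x_def by linarith
    have "c * sqrt (real k) \<le> c * sqrt x" using kx c by (intro mult_left_mono) auto
    moreover have "real N \<le> 2 * real (fp c k) + 1" using k2 by linarith
    ultimately have "x - 1/2 - c * sqrt x \<le> real k" using fp_real_ub[of c k] c unfolding x_def by linarith
    then show "k \<in> {k. x - 1/2 - c * sqrt x \<le> real k \<and> real k < x}" using kx by simp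
  qed
  have cardlb: "c * sqrt x - c^2 - 2 \<le> real (card W)"
  proof -
    have "x - (x - c * sqrt x + c^2 + 1) - 1 \<le> real (card {k. x - c * sqrt x + c^2 + 1 \<le> real k \<and> real k < x})"
      by (rule card_lb) (use quad_nonneg[OF x0, of c] in simp)
    also have "\<dots> \<le> real (card W)" using S1 finW by (simp add: card_mono)
    finally show ?thesis by simp
  qed
  have cardub: "real (card W) \<le> c * sqrt x + 3/2"
  proof -
    have "real (card W) \<le> real (card {k. x - 1/2 - c * sqrt x \<le> real k \<and> real k < x})"
      using S2 by (intro of_nat_mono card_mono fin_nat_interval)
    also have "\<dots> \<le> x - (x - 1/2 - c * sqrt x) + 1" by (rule card_ub) (use csx in simp)
    finally show ?thesis by simp
  qed
  have "real (card W) * (1 / sqrt (x+1)) \<le> (\<Sum>k\<in>W. hh k)"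
  proof (rule sum_bounded_below)
    fix k assume "k \<in> W"
    then have "real k < x" using S2 by auto
    then show "1 / sqrt (x+1) \<le> hh k" by (intro hh_ge) simp
  qed
  moreover have "(c * sqrt x - c^2 - 2) * (1 / sqrt (x+1)) \<le> real (card W) * (1 / sqrt (x+1))"
    using cardlb x0 by (intro mult_right_mono) auto
  ultimately show "(c * sqrt x - c^2 - 2) / sqrt (x+1) \<le> (\<Sum>k\<in>W. hh k)" by simp
  assume D: "0 < x + 1/2 - c * sqrt x"
  have "(\<Sum>k\<in>W. hh k) \<le> real (card W) * (1 / sqrt (x + 1/2 - c * sqrt x))"
  proof (rule sum_bounded_above)
    fix k assume "k \<in> W"
    then have "x - 1/2 - c * sqrt x \<le> real k" using S2 by auto
    then show "hh k \<le> 1 / sqrt (x + 1/2 - c * sqrt x)" by (intro hh_le D) simp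
  qed
  also have "\<dots> \<le> (c * sqrt x + 3/2) * (1 / sqrt (x + 1/2 - c * sqrt x))"
    using cardub D by (intro mult_right_mono) auto
  finally show "(\<Sum>k\<in>W. hh k) \<le> (c * sqrt x + 3/2) / sqrt (x + 1/2 - c * sqrt x)" by simp
qed


lemma neg_heavy:
  fixes N :: nat
  assumes c: "0 < c"
  defines "W \<equiv> {k. 2*k+1 < N \<and> N \<le> 2 * Suc (fp c k)}"
  defines "x \<equiv> real N / 2"
  shows "(c * sqrt x - c^2 - 3/2) / sqrt (x + 3/2 + c * sqrt x) \<le> (\<Sum>k\<in>W. hh (Suc (fp c k)))"
    and "(\<Sum>k\<in>W. hh (Suc (fp c k))) \<le> (c * sqrt x + 3/2) / sqrt (x + 1)"
    and "W \<subseteq> {k. x - 1 - c * sqrt x \<le> real k \<and> real k < x - 1/2}"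
proof -
  have x0: "0 \<le> x" unfolding x_def by simp
  have csx: "0 \<le> c * sqrt x" using c x0 by simp
  have finW: "finite W" by (rule finite_subset[of _ "{..<N}"]) (auto simp: W_def)
  have S1: "{k. x - c * sqrt x + c^2 \<le> real k \<and> real k < x - 1/2} \<subseteq> W"
  proof
    fix k assume "k \<in> {k. x - c * sqrt x + c^2 \<le> real k \<and> real k < x - 1/2}"
    then have k1: "x - c * sqrt x + c^2 \<le> real k" and k2: "real k < x - 1/2" by auto
    have sq: "sqrt x - c \<le> sqrt (real k)" by (rule sqrt_lower) (use x0 c k1 in auto)
    have "c * (sqrt x - c) \<le> c * sqrt (real k)" using sq c by (intro mult_left_mono) auto
    then have "real (fp c k) + 1 > x" using fp_real_lb[of c k] c k1 by (simp add: algebra_simps power2_eq_square)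
    then have "real N < real (2 * Suc (fp c k))" unfolding x_def by simp
    then have "N \<le> 2 * Suc (fp c k)" by linarith
    moreover have "2 * k + 1 < N" using k2 unfolding x_def by linarith
    ultimately show "k \<in> W" unfolding W_def by simp
  qed
  have S2: "W \<subseteq> {k. x - 1 - c * sqrt x \<le> real k \<and> real k < x - 1/2}"
  proof
    fix k assume "k \<in> W"
    then have k1: "2 * k + 1 < N" and k2: "N \<le> 2 * Suc (fp c k)" by (auto simp: W_def)
    have kx: "real k < x - 1/2" using k1 unfolding x_def by linarith
    have "c * sqrt (real k) \<le> c * sqrt x" using kx c by (intro mult_left_mono) auto
    moreover have "real N \<le> 2 * real (fp c k) + 2"
    proof -
      have "real N \<le> real (2 * Suc (fp c k))" using k2 by (simp only: of_nat_le_iff)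
      then show ?thesis by simp
    qed
    ultimately have "x - 1 - c * sqrt x \<le> real k" using fp_real_ub[of c k] c unfolding x_def by linarith
    then show "k \<in> {k. x - 1 - c * sqrt x \<le> real k \<and> real k < x - 1/2}" using kx by simp
  qed
  then show "W \<subseteq> {k. x - 1 - c * sqrt x \<le> real k \<and> real k < x - 1/2}" .
  have cardlb: "c * sqrt x - c^2 - 3/2 \<le> real (card W)"
  proof -
    have "(x - 1/2) - (x - c * sqrt x + c^2) - 1 \<le> real (card {k. x - c * sqrt x + c^2 \<le> real k \<and> real k < x - 1/2})"
      by (rule card_lb) (use quad_nonneg[OF x0, of c] in simp)
    also have "\<dots> \<le> real (card W)" using S1 finW by (simp add: card_mono)
    finally show ?thesis by simp
  qed
  have cardub: "real (card W) \<le> c * sqrt x + 3/2"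
  proof -
    have "real (card W) \<le> real (card {k. x - 1 - c * sqrt x \<le> real k \<and> real k < x - 1/2})"
      using S2 by (intro of_nat_mono card_mono fin_nat_interval)
    also have "\<dots> \<le> (x - 1/2) - (x - 1 - c * sqrt x) + 1" by (rule card_ub) (use csx in simp)
    finally show ?thesis by simp
  qed
  have D: "0 < x + 3/2 + c * sqrt x" using x0 csx by simp
  have "real (card W) * (1 / sqrt (x + 3/2 + c * sqrt x)) \<le> (\<Sum>k\<in>W. hh (Suc (fp c k)))"
  proof (rule sum_bounded_below)
    fix k assume "k \<in> W"
    then have k: "x - 1 - c * sqrt x \<le> real k \<and> real k < x - 1/2" using S2 by auto
    have "c * sqrt (real k) \<le> c * sqrt x" using k c by (intro mult_left_mono) auto
    moreover have "real (Suc (fp c k)) = real (fp c k) + 1" by simp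
    ultimately have "real (Suc (fp c k)) + 1 \<le> x + 3/2 + c * sqrt x" using fp_real_ub[of c k] c k by linarith
    then show "1 / sqrt (x + 3/2 + c * sqrt x) \<le> hh (Suc (fp c k))" by (intro hh_ge)
  qed
  moreover have "(c * sqrt x - c^2 - 3/2) * (1 / sqrt (x + 3/2 + c * sqrt x)) \<le> real (card W) * (1 / sqrt (x + 3/2 + c * sqrt x))"
    using cardlb D by (intro mult_right_mono) auto
  ultimately show "(c * sqrt x - c^2 - 3/2) / sqrt (x + 3/2 + c * sqrt x) \<le> (\<Sum>k\<in>W. hh (Suc (fp c k)))" by simp
  have "(\<Sum>k\<in>W. hh (Suc (fp c k))) \<le> real (card W) * (1 / sqrt (x + 1))"
  proof (rule sum_bounded_above)
    fix k assume "k \<in> W"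
    then have "N \<le> 2 * Suc (fp c k)" by (auto simp: W_def)
    then have "real N \<le> real (2 * Suc (fp c k))" by (simp only: of_nat_le_iff)
    then have "x + 1 \<le> real (Suc (fp c k)) + 1" unfolding x_def by simp
    then show "hh (Suc (fp c k)) \<le> 1 / sqrt (x + 1)" by (intro hh_le) (use x0 in auto)
  qed
  also have "\<dots> \<le> (c * sqrt x + 3/2) * (1 / sqrt (x + 1))"
    using cardub x0 by (intro mult_right_mono) auto
  finally show "(\<Sum>k\<in>W. hh (Suc (fp c k))) \<le> (c * sqrt x + 3/2) / sqrt (x + 1)" by simp
qed

lemma pos_light:
  fixes N :: nat
  assumes c: "0 \<le> c"
  shows "0 \<le> (\<Sum>k\<in>{k. 2*k < N \<and> N \<le> 2 * fp c k + 1}. ll (fp c k))"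
    and "(\<Sum>k\<in>{k. 2*k < N \<and> N \<le> 2 * fp c k + 1}. ll (fp c k)) \<le> 2 * (1/2) powr (real N/2 - 1/2)"
proof -
  let ?W = "{k. 2*k < N \<and> N \<le> 2 * fp c k + 1}"
  have finW: "finite ?W" by (rule finite_subset[of _ "{..<N}"]) auto
  show "0 \<le> (\<Sum>k\<in>?W. ll (fp c k))" by (intro sum_nonneg) (simp add: ll_def)
  have "(\<Sum>k\<in>?W. ll (fp c k)) = (\<Sum>j\<in>fp c ` ?W. (1/2)^j)"
    by (subst sum.reindex) (auto simp: ll_def intro: inj_on_subset[OF fp_inj[OF c]])
  also have "\<dots> \<le> 2 * (1/2) powr (real N/2 - 1/2)"
    by (rule geom_tail) (use finW in auto)
  finally show "(\<Sum>k\<in>?W. ll (fp c k)) \<le> 2 * (1/2) powr (real N/2 - 1/2)" .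
qed

lemma neg_light:
  fixes N :: nat
  assumes c: "0 < c"
  shows "0 \<le> (\<Sum>k\<in>{k. 2*k+1 < N \<and> N \<le> 2 * Suc (fp c k)}. ll k)"
    and "(\<Sum>k\<in>{k. 2*k+1 < N \<and> N \<le> 2 * Suc (fp c k)}. ll k) \<le> 2 * (1/2) powr (real N/2 - 1 - c * sqrt (real N/2))"
proof -
  let ?W = "{k. 2*k+1 < N \<and> N \<le> 2 * Suc (fp c k)}"
  have finW: "finite ?W" by (rule finite_subset[of _ "{..<N}"]) auto
  show "0 \<le> (\<Sum>k\<in>?W. ll k)" by (intro sum_nonneg) (simp add: ll_def)
  show "(\<Sum>k\<in>?W. ll k) \<le> 2 * (1/2) powr (real N/2 - 1 - c * sqrt (real N/2))"
    unfolding ll_def by (rule geom_tail) (use finW neg_heavy(3)[OF c, of N] in auto)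
qed


lemma pos_heavy_lim:
  assumes c: "0 < c"
  shows "(\<lambda>N. \<Sum>k\<in>{k. 2*k < N \<and> N \<le> 2 * fp c k + 1}. hh k) \<longlonglongrightarrow> c"
proof (rule tendsto_sandwich[OF _ _ L1[OF c] U1[OF c]])
  show "\<forall>\<^sub>F N in sequentially. (c * sqrt (real N / 2) - c\<^sup>2 - 2) / sqrt (real N / 2 + 1)
          \<le> (\<Sum>k\<in>{k. 2*k < N \<and> N \<le> 2 * fp c k + 1}. hh k)"
    using pos_heavy(1)[OF c] by simp
  show "\<forall>\<^sub>F N in sequentially. (\<Sum>k\<in>{k. 2*k < N \<and> N \<le> 2 * fp c k + 1}. hh k)
          \<le> (c * sqrt (real N / 2) + 3 / 2) / sqrt (real N / 2 + 1 / 2 - c * sqrt (real N / 2))"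
    using E1[OF c] by eventually_elim (rule pos_heavy(2)[OF c])
qed

lemma neg_heavy_lim:
  assumes c: "0 < c"
  shows "(\<lambda>N. \<Sum>k\<in>{k. 2*k+1 < N \<and> N \<le> 2 * Suc (fp c k)}. hh (Suc (fp c k))) \<longlonglongrightarrow> c"
proof (rule tendsto_sandwich[OF _ _ L2[OF c] U2[OF c]])
  show "\<forall>\<^sub>F N in sequentially. (c * sqrt (real N / 2) - c\<^sup>2 - 3 / 2) / sqrt (real N / 2 + 3 / 2 + c * sqrt (real N / 2))
          \<le> (\<Sum>k\<in>{k. 2*k+1 < N \<and> N \<le> 2 * Suc (fp c k)}. hh (Suc (fp c k)))"
    using neg_heavy(1)[OF c] by simp
  show "\<forall>\<^sub>F N in sequentially. (\<Sum>k\<in>{k. 2*k+1 < N \<and> N \<le> 2 * Suc (fp c k)}. hh (Suc (fp c k)))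
          \<le> (c * sqrt (real N / 2) + 3 / 2) / sqrt (real N / 2 + 1)"
    using neg_heavy(2)[OF c] by simp
qed

lemma pos_light_lim:
  assumes c: "0 \<le> c"
  shows "(\<lambda>N. \<Sum>k\<in>{k. 2*k < N \<and> N \<le> 2 * fp c k + 1}. ll (fp c k)) \<longlonglongrightarrow> 0"
  by (rule tendsto_sandwich[OF _ _ tendsto_const T2[OF zero_less_one]]) (use pos_light[OF c] in simp_all)

lemma neg_light_lim:
  assumes c: "0 < c"
  shows "(\<lambda>N. \<Sum>k\<in>{k. 2*k+1 < N \<and> N \<le> 2 * Suc (fp c k)}. ll k) \<longlonglongrightarrow> 0"
  by (rule tendsto_sandwich[OF _ _ tendsto_const T1[OF c]]) (use neg_light[OF c] in simp_all)

lemma pos_case: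
  assumes c: "0 < c"
  shows "\<exists>\<tau>. bij \<tau> \<and> (\<lambda>n. yy n - yy (\<tau> n)) sums c"
proof -
  let ?s = c
  let ?a = "\<lambda>k::nat. 2*k" and ?b = "\<lambda>k. 2 * fp c k + 1"
  have ia: "inj ?a" by (auto simp: inj_on_def)
  have fi: "inj (fp c)" by (rule fp_inj) (use c in simp)
  have ib: "inj ?b"
  proof (rule injI)
    fix k m assume "?b k = ?b m"
    then have "fp c k = fp c m" by simp
    then show "k = m" using injD[OF fi] by blast
  qed
  have dj: "range ?a \<inter> range ?b = {}"
  proof -
    have "?a k \<noteq> ?b m" for k m by presburger
    then show ?thesis by blast
  qed
  have lt: "?a k < ?b k" for k using fp_ge[of k c] by simp
  have eq: "(\<lambda>N. \<Sum>n<N. yy n - yy (swp ?a ?b n)) = (\<lambda>N. (\<Sum>k\<in>{k. 2*k < N \<and> N \<le> 2 * fp c k + 1}. hh k)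
          - (\<Sum>k\<in>{k. 2*k < N \<and> N \<le> 2 * fp c k + 1}. ll (fp c k)))"
    by (subst swp_partial[OF ia ib dj lt]) (simp add: yy_def sum_subtractf)
  have lim: "\<dots> \<longlonglongrightarrow> c - 0"
    by (intro tendsto_diff pos_heavy_lim pos_light_lim) (use c in auto)
  have bj: "bij (swp ?a ?b)" by (rule swp_bij[OF ia ib dj])
  have "(\<lambda>n. yy n - yy (swp ?a ?b n)) sums ?s"
    unfolding sums_def eq using lim by simp
  then show ?thesis using bj by blast
qed

lemma neg_case:
  assumes c: "0 < c"
  shows "\<exists>\<tau>. bij \<tau> \<and> (\<lambda>n. yy n - yy (\<tau> n)) sums (- c)"
proof -
  let ?s = "- c"
  let ?a = "\<lambda>k::nat. 2*k+1" and ?b = "\<lambda>k. 2 * Suc (fp c k)"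
  have ia: "inj ?a" by (auto simp: inj_on_def)
  have fi: "inj (fp c)" by (rule fp_inj) (use c in simp)
  have ib: "inj ?b"
  proof (rule injI)
    fix k m assume "?b k = ?b m"
    then have "fp c k = fp c m" by simp
    then show "k = m" using injD[OF fi] by blast
  qed
  have dj: "range ?a \<inter> range ?b = {}"
  proof -
    have "?a k \<noteq> ?b m" for k m by presburger
    then show ?thesis by blast
  qed
  have lt: "?a k < ?b k" for k using fp_ge[of k c] by simp
  have eq: "(\<lambda>N. \<Sum>n<N. yy n - yy (swp ?a ?b n)) = (\<lambda>N. (\<Sum>k\<in>{k. 2*k+1 < N \<and> N \<le> 2 * Suc (fp c k)}. ll k)
          - (\<Sum>k\<in>{k. 2*k+1 < N \<and> N \<le> 2 * Suc (fp c k)}. hh (Suc (fp c k))))"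
    by (subst swp_partial[OF ia ib dj lt]) (simp add: yy_def sum_subtractf)
  have lim: "\<dots> \<longlonglongrightarrow> 0 - c"
    by (intro tendsto_diff neg_heavy_lim neg_light_lim) (use c in auto)
  have bj: "bij (swp ?a ?b)" by (rule swp_bij[OF ia ib dj])
  have "(\<lambda>n. yy n - yy (swp ?a ?b n)) sums ?s"
    unfolding sums_def eq using lim by simp
  then show ?thesis using bj by blast
qed

lemma sqrt_le_self: assumes "1 \<le> (z::real)" shows "sqrt z \<le> z"
proof -
  have "z * 1 \<le> z * z" by (rule mult_left_mono) (use assms in auto)
  then have "sqrt z \<le> sqrt (z * z)" by (intro real_sqrt_le_mono) simp
  also have "sqrt (z * z) = z" using assms by simp
  finally show ?thesis .
qed

lemma ll_le_hh: "ll j \<le> hh j"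
proof -
  have "j < 2^j" by (rule less_exp)
  then have "real j + 1 \<le> 2^j" by (metis Suc_leI of_nat_Suc of_nat_le_iff of_nat_numeral of_nat_power add.commute)
  moreover have "sqrt (real j + 1) \<le> real j + 1" by (rule sqrt_le_self) simp
  ultimately have "sqrt (real j + 1) \<le> 2^j" by linarith
  then show ?thesis by (simp add: ll_def hh_def power_divide frac_le)
qed

lemma hh_ge_inv: "inverse (real (Suc n)) \<le> hh n"
proof -
  have "sqrt (real n + 1) \<le> real n + 1" by (rule sqrt_le_self) simp
  then show ?thesis by (simp add: hh_def inverse_eq_divide frac_le add.commute)
qed

lemma yy_pos: "yy n > 0" by (simp add: yy_def hh_pos ll_def)

lemma yy_not_summable: "\<not> summable yy"
proof
  assume "summable yy"
  then have "summable (\<lambda>n. sum yy {n * 2 ..< n * 2 + 2})"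
    using sums_group[of yy _ 2] by (auto simp: summable_def)
  moreover have "norm (inverse (real (Suc n))) \<le> sum yy {n * 2 ..< n * 2 + 2}" for n
  proof -
    have "sum yy {n * 2 ..< n * 2 + 2} = yy (2*n) + yy (2*n+1)" by (simp add: numeral_2_eq_2 mult.commute)
    also have "\<dots> = hh n + yy (2*n+1)" by (simp add: yy_def)
    finally show ?thesis using hh_ge_inv[of n] yy_pos[of "2*n+1"] by simp
  qed
  ultimately have "summable (\<lambda>n. inverse (real (Suc n)))" by (rule summable_comparison_test'[where N=0]) 
  then have "summable (\<lambda>n. inverse (real n))" using summable_Suc_iff[of "\<lambda>n. inverse (real n)"] by simp
  then show False using not_summable_harmonic by blast
qed

lemma yy_lim: "yy \<longlonglongrightarrow> 0"
proof (rule tendsto_sandwich[OF _ _ tendsto_const])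
  show "\<forall>\<^sub>F n in sequentially. 0 \<le> yy n" using yy_pos by (simp add: less_imp_le)
  show "(\<lambda>n. 1 / sqrt (real n / 2 + 1/2)) \<longlonglongrightarrow> 0" by real_asymp
  have "yy n \<le> 1 / sqrt (real n / 2 + 1/2)" for n
  proof -
    have "yy n \<le> hh (n div 2)" using ll_le_hh by (simp add: yy_def)
    also have "\<dots> \<le> 1 / sqrt (real n / 2 + 1/2)"
    proof (rule hh_le)
      have "real n \<le> 2 * real (n div 2) + 1" by linarith
      then show "real n / 2 + 1/2 \<le> real (n div 2) + 1" by simp
    qed simp
    finally show ?thesis .
  qed
  then show "\<forall>\<^sub>F n in sequentially. yy n \<le> 1 / sqrt (real n / 2 + 1/2)" by simp
qed

theorem mainTheorem6:
  shows "\<exists>y :: nat \<Rightarrow> real.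
           (\<forall>n. y n > 0) \<and> \<not> summable y \<and> y \<longlonglongrightarrow> 0 \<and>
           {s. \<exists>\<tau> :: nat \<Rightarrow> nat. bij \<tau> \<and> (\<lambda>n. y n - y (\<tau> n)) sums s} = UNIV"
proof (intro exI[of _ yy] conjI allI yy_pos yy_not_summable yy_lim)
  have "\<exists>\<tau> :: nat \<Rightarrow> nat. bij \<tau> \<and> (\<lambda>n. yy n - yy (\<tau> n)) sums s" for s
  proof (cases "s = 0")
    case True
    then show ?thesis by (intro exI[of _ id]) simp
  next
    case False
    then show ?thesis
    proof (cases "s > 0")
      case True
      then show ?thesis by (rule pos_case)
    next
      case False
      with \<open>s \<noteq> 0\<close> have "0 < - s" by simp
      from neg_case[OF this] show ?thesis by simp
    qed
  qed
  then show "{s. \<exists>\<tau> :: nat \<Rightarrow> nat. bij \<tau> \<and> (\<lambda>n. yy n - yy (\<tau> n)) sums s} = UNIV" by blast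
qed

end
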